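(* Let $(\mathbb{X},d,\mu)$ be a proper, geodesic metric measure space, $\Omega\subset\mathbb{X}$ a bounded domain and $\varrho$ an admissible radius function in $\Omega$. Suppose that for every compact $K\subset\Omega$ a modulus of continuity $\mathcal{W}_{\mu,K}$ is given such that $|\mathcal{M}^nv(x)-\mathcal{M}^nv(y)|\le\|v\|_\infty\mathcal{W}_{\mu,K}(d(x,y))$ for all $v\in L^\infty(\Omega)$, $x,y\in K$, $n\in\mathbb{N}$. Let $|\alpha|\leq1$, $u\in C(\overline\Omega)$, $K\subset\Omega$ compact, and let $\omega$ be a concave modulus of continuity for $u$ on $\widetilde K$. Then for all $x,y\in K$, $$|\mathcal{T}_\alpha u(x)-\mathcal{T}_\alpha u(y)|\leq|\alpha|\,\omega\left(\widehat\omega_\varrho(d(x,y))\right)+(1-\alpha)\|u\|_\infty\mathcal{W}_{\mu,K}(d(x,y)).$$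
   Context: A metric space is proper if closed bounded sets are compact, and geodesic if any two points $x,y$ are joined by a curve of length $d(x,y)$. A metric measure space is a metric space with a positive Borel regular measure $\mu$ with $0<\mu(B)<\infty$ for every ball $B$. An admissible radius function in $\Omega$ is $\varrho\in C(\overline\Omega)$, $\varrho\ge0$, with $0<\varrho(x)\leq\mathrm{dist}(x,\partial\Omega)$ for $x\in\Omega$ and $\varrho=0$ exactly on $\partial\Omega$. $B_x=\overline{B}(x,\varrho(x))$, $\widetilde K=\bigcup_{x\in K}B_x$. For $x\in\Omega$: $\mathcal{M}u(x)=\frac{1}{\mu(B_x)}\int_{B_x}u\,d\mu$, $\mathcal{S}u(x)=\frac12(\sup_{B_x}u+\inf_{B_x}u)$, $\mathcal{T}_\alpha u=\alpha\mathcal{S}u+(1-\alpha)\mathcal{M}u$. A modulus of continuity is a nondecreasing continuous $\omega:[0,\mathrm{diam}\,\Omega]\to[0,\infty)$ with $\omega(0)=0$. Fix a concave modulus of continuity $\omega_{\varrho,\Omega}$ for $\varrho$ on $\Omega$ with $\omega_{\varrho,\Omega}(\mathrm{diam}\,\Omega)\le\mathrm{diam}\,\Omega$; set $\widehat\omega_\varrho(t)=t$ if $\omega_{\varrho,\Omega}(t)\le t$ for all $t\in[0,\mathrm{diam}\,\Omega]$, and otherwise $\widehat\omega_\varrho(t)=\frac{\mathrm{diam}\,\Omega}{\omega_{\varrho,\Omega}(\mathrm{diam}\,\Omega)}\omega_{\varrho,\Omega}(t)$. *)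

theory Defs
  imports "HOL-Analysis.Analysis"
begin

definition proper_space :: "'a::metric_space itself \<Rightarrow> bool" where
  "proper_space _ \<longleftrightarrow> (\<forall>S::'a set. closed S \<and> bounded S \<longrightarrow> compact S)"

definition curve_length :: "(real \<Rightarrow> 'a::metric_space) \<Rightarrow> ereal" where
  "curve_length g = (SUP p \<in> {(n, t). mono_on {..n} (t::nat \<Rightarrow> real) \<and> t ` {..n} \<subseteq> {0..1}}.
      ereal (\<Sum>i<fst p. dist (g (snd p i)) (g (snd p (Suc i)))))"

definition geodesic_space :: "'a::metric_space itself \<Rightarrow> bool" where
  "geodesic_space _ \<longleftrightarrow> (\<forall>x y::'a. \<exists>g. continuous_on {0..1} g \<and> g 0 = x \<and> g 1 = y
      \<and> curve_length g = ereal (dist x y))"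

definition metric_measure_space :: "'a::metric_space measure \<Rightarrow> bool" where
  "metric_measure_space \<mu> \<longleftrightarrow> sets \<mu> = sets borel \<and>
      (\<forall>x r. r > 0 \<longrightarrow> 0 < emeasure \<mu> (ball x r) \<and> emeasure \<mu> (ball x r) < \<infinity>)"

definition bounded_domain :: "'a::metric_space set \<Rightarrow> bool" where
  "bounded_domain \<Omega> \<longleftrightarrow> \<Omega> \<noteq> {} \<and> open \<Omega> \<and> connected \<Omega> \<and> bounded \<Omega>"

text \<open>Admissible radius function. If the boundary is empty, dist(x, boundary) is taken
  to be +infinity, so the upper bound is vacuous.\<close>
definition admissible_radius :: "'a::metric_space set \<Rightarrow> ('a \<Rightarrow> real) \<Rightarrow> bool" where
  "admissible_radius \<Omega> \<rho> \<longleftrightarrow> continuous_on (closure \<Omega>) \<rho> \<and>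
      (\<forall>x\<in>closure \<Omega>. \<rho> x \<ge> 0) \<and>
      (\<forall>x\<in>\<Omega>. 0 < \<rho> x \<and> (frontier \<Omega> \<noteq> {} \<longrightarrow> \<rho> x \<le> infdist x (frontier \<Omega>))) \<and>
      (\<forall>x\<in>closure \<Omega>. \<rho> x = 0 \<longleftrightarrow> x \<in> frontier \<Omega>)"

definition modulus :: "real \<Rightarrow> (real \<Rightarrow> real) \<Rightarrow> bool" where
  "modulus D w \<longleftrightarrow> mono_on {0..D} w \<and> continuous_on {0..D} w \<and> w 0 = 0 \<and>
      (\<forall>t\<in>{0..D}. 0 \<le> w t)"

definition modulus_for :: "real \<Rightarrow> (real \<Rightarrow> real) \<Rightarrow> ('a::metric_space \<Rightarrow> real) \<Rightarrow> 'a set \<Rightarrow> bool" where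
  "modulus_for D w f A \<longleftrightarrow> modulus D w \<and> (\<forall>x\<in>A. \<forall>y\<in>A. \<bar>f x - f y\<bar> \<le> w (dist x y))"

definition omega_hat :: "real \<Rightarrow> (real \<Rightarrow> real) \<Rightarrow> real \<Rightarrow> real" where
  "omega_hat D wr t = (if (\<forall>s\<in>{0..D}. wr s \<le> s) then t else D / wr D * wr t)"

definition Bx :: "('a::metric_space \<Rightarrow> real) \<Rightarrow> 'a \<Rightarrow> 'a set" where
  "Bx \<rho> x = cball x (\<rho> x)"

definition Ktilde :: "('a::metric_space \<Rightarrow> real) \<Rightarrow> 'a set \<Rightarrow> 'a set" where
  "Ktilde \<rho> K = (\<Union>x\<in>K. Bx \<rho> x)"

text \<open>Mean value operator; outside Omega (where rho = 0 on the boundary) it acts as the identity.\<close>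
definition Mop :: "'a::metric_space measure \<Rightarrow> ('a \<Rightarrow> real) \<Rightarrow> 'a set \<Rightarrow> ('a \<Rightarrow> real) \<Rightarrow> 'a \<Rightarrow> real" where
  "Mop \<mu> \<rho> \<Omega> u x = (if x \<in> \<Omega> then (\<integral>y\<in>Bx \<rho> x. u y \<partial>\<mu>) / measure \<mu> (Bx \<rho> x) else u x)"

definition Sop :: "('a::metric_space \<Rightarrow> real) \<Rightarrow> 'a set \<Rightarrow> ('a \<Rightarrow> real) \<Rightarrow> 'a \<Rightarrow> real" where
  "Sop \<rho> \<Omega> u x = (if x \<in> \<Omega> then (Sup (u ` Bx \<rho> x) + Inf (u ` Bx \<rho> x)) / 2 else u x)"

definition Top :: "'a::metric_space measure \<Rightarrow> ('a \<Rightarrow> real) \<Rightarrow> 'a set \<Rightarrow> real \<Rightarrow> ('a \<Rightarrow> real) \<Rightarrow> 'a \<Rightarrow> real" where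
  "Top \<mu> \<rho> \<Omega> \<alpha> u x = \<alpha> * Sop \<rho> \<Omega> u x + (1 - \<alpha>) * Mop \<mu> \<rho> \<Omega> u x"

definition ess_bounded_on :: "'a measure \<Rightarrow> 'a set \<Rightarrow> ('a \<Rightarrow> real) \<Rightarrow> bool" where
  "ess_bounded_on \<mu> A v \<longleftrightarrow> (\<exists>C. AE x in \<mu>. x \<in> A \<longrightarrow> \<bar>v x\<bar> \<le> C)"

definition ess_norm :: "'a measure \<Rightarrow> 'a set \<Rightarrow> ('a \<Rightarrow> real) \<Rightarrow> real" where
  "ess_norm \<mu> A v = Inf {C. 0 \<le> C \<and> (AE x in \<mu>. x \<in> A \<longrightarrow> \<bar>v x\<bar> \<le> C)}"

end

theory Submission imports Defs begin

lemma geo_path: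
  assumes "geodesic_space TYPE('a::metric_space)"
  shows "\<exists>g::real\<Rightarrow>'a. continuous_on {0..1} g \<and> g 0 = (x::'a) \<and> g 1 = y \<and>
     (\<forall>t\<in>{0..1}. dist x (g t) + dist (g t) y \<le> dist x y)"
proof -
  obtain g where g: "continuous_on {0..1} g" "g 0 = x" "g 1 = y" "curve_length g = ereal (dist x y)"
    using assms unfolding geodesic_space_def by blast
  have "dist x (g t) + dist (g t) y \<le> dist x y" if t: "t \<in> {0..1}" for t
  proof -
    define p where "p = (\<lambda>i::nat. if i = 0 then 0 else if i = 1 then t else (1::real))"
    have "(2::nat, p) \<in> {(n, t). mono_on {..n} (t::nat \<Rightarrow> real) \<and> t ` {..n} \<subseteq> {0..1}}"
      using t by (auto simp: p_def mono_on_def)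
    hence "ereal (\<Sum>i<fst (2::nat,p). dist (g (snd (2::nat,p) i)) (g (snd (2::nat,p) (Suc i)))) \<le> curve_length g"
      unfolding curve_length_def by (rule SUP_upper)
    moreover have "(\<Sum>i<fst (2::nat,p). dist (g (snd (2::nat,p) i)) (g (snd (2::nat,p) (Suc i))))
        = dist x (g t) + dist (g t) y"
      by (simp add: p_def numeral_2_eq_2 g)
    ultimately show ?thesis using g(4) by simp
  qed
  thus ?thesis using g by blast
qed

lemma geo_point:
  fixes y z :: "'a::metric_space"
  assumes "geodesic_space TYPE('a::metric_space)" "0 \<le> s" "s \<le> dist y z"
  shows "\<exists>w::'a. dist y w = s \<and> dist w z \<le> dist y z - s"
proof -
  obtain g :: "real \<Rightarrow> 'a" where g: "continuous_on {0..1} g" "g 0 = y" "g 1 = z"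
     "\<forall>t\<in>{0..1}. dist y (g t) + dist (g t) z \<le> dist y z"
    using geo_path[OF assms(1)] by blast
  have c: "continuous_on {0..1} (\<lambda>t. dist y (g t))"
    by (intro continuous_intros g(1))
  obtain t where t: "0 \<le> t" "t \<le> 1" "dist y (g t) = s"
    using IVT'[of "\<lambda>t. dist y (g t)" 0 s 1, OF _ _ _ c] g assms by auto
  thus ?thesis using g(4) by (intro exI[of _ "g t"]) force
qed

lemma ball_closure:
  fixes \<Omega> :: "'a::metric_space set"
  assumes geo: "geodesic_space TYPE('a::metric_space)" and adm: "admissible_radius \<Omega> \<rho>"
    and x: "x \<in> \<Omega>" and op: "open \<Omega>"
  shows "Bx \<rho> x \<subseteq> closure \<Omega>"
proof
  fix z assume z: "z \<in> Bx \<rho> x"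
  show "z \<in> closure \<Omega>"
  proof (rule ccontr)
    assume nz: "z \<notin> closure \<Omega>"
    obtain g :: "real \<Rightarrow> 'a" where g: "continuous_on {0..1} g" "g 0 = x" "g 1 = z"
     "\<forall>t\<in>{0..1}. dist x (g t) + dist (g t) z \<le> dist x z"
      using geo_path[OF geo] by blast
    have "connected (g ` {0..1})" by (intro connected_continuous_image g(1) connected_Icc)
    moreover have "g ` {0..1} \<inter> \<Omega> \<noteq> {}" using g x by force
    moreover have "g ` {0..1} - \<Omega> \<noteq> {}" using g nz closure_subset
      by (metis Diff_iff atLeastAtMost_iff empty_iff image_eqI order.refl subsetD zero_le_one)
    ultimately have "g ` {0..1} \<inter> frontier \<Omega> \<noteq> {}" by (rule connected_Int_frontier)
    then obtain t where t: "t \<in> {0..1}" "g t \<in> frontier \<Omega>" by blast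
    have "g t \<noteq> z" using t nz frontier_def by (metis Diff_iff)
    hence "0 < dist (g t) z" by simp
    moreover have "dist x (g t) + dist (g t) z \<le> dist x z" using g(4) t(1) by blast
    ultimately have lt: "dist x (g t) < dist x z" by linarith
    have "dist x z \<le> \<rho> x" using z by (simp add: Bx_def dist_commute)
    moreover have "\<rho> x \<le> infdist x (frontier \<Omega>)" using adm x t unfolding admissible_radius_def by blast
    moreover have "infdist x (frontier \<Omega>) \<le> dist x (g t)" using t(2) by (rule infdist_le)
    ultimately show False using lt by linarith
  qed
qed

lemma ball_shift:
  fixes z :: "'a::metric_space"
  assumes geo: "geodesic_space TYPE('a::metric_space)" and ry: "0 \<le> \<rho> y"
    and z: "z \<in> Bx \<rho> x"
  shows "\<exists>z'\<in>Bx \<rho> y. dist z z' \<le> max 0 (dist x y + \<rho> x - \<rho> y)"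
proof (cases "dist y z \<le> \<rho> y")
  case True thus ?thesis by (intro bexI[of _ z]) (auto simp: Bx_def)
next
  case False
  obtain w where w: "dist y w = \<rho> y" "dist w z \<le> dist y z - \<rho> y"
    using geo_point[OF geo ry, of y z] False by force
  have "dist y z \<le> dist x y + dist x z" by (metis dist_commute dist_triangle)
  moreover have "dist x z \<le> \<rho> x" using z by (simp add: Bx_def)
  ultimately show ?thesis using w by (intro bexI[of _ w]) (auto simp: Bx_def dist_commute)
qed

lemma concave_avg:
  fixes w :: "real \<Rightarrow> real"
  assumes "concave_on {0..D} w" "a \<in> {0..D}" "b \<in> {0..D}"
  shows "w a + w b \<le> 2 * w ((a+b)/2)"
proof -
  have "(1 - 1/2) * w a + (1/2) * w b \<le> w ((1 - 1/2) *\<^sub>R a + (1/2) *\<^sub>R b)"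
    by (rule concave_onD[OF assms(1)]) (use assms in auto)
  thus ?thesis by (simp add: field_simps)
qed

lemma omega_hat_eq2: "\<not>(\<forall>s\<in>{0..D}. wr s \<le> s) \<Longrightarrow> omega_hat D wr t = D / wr D * wr t"
  unfolding omega_hat_def by (rule if_not_P)

lemma omega_hat_props:
  assumes m: "modulus D wr" and cc: "concave_on {0..D} wr" and wD: "wr D \<le> D"
    and d: "0 \<le> d" "d \<le> D"
  shows "d \<le> omega_hat D wr d \<and> wr d \<le> omega_hat D wr d \<and> omega_hat D wr d \<le> D"
proof (cases "\<forall>s\<in>{0..D}. wr s \<le> s")
  case True thus ?thesis using d by (auto simp: omega_hat_def)
next
  case False
  then obtain s where s: "s \<in> {0..D}" "wr s > s" by force
  have mono: "mono_on {0..D} wr" and w0: "wr 0 = 0" and nn: "\<forall>t\<in>{0..D}. 0 \<le> wr t"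
    using m by (auto simp: modulus_def)
  have D0: "D > 0" using s w0 by (cases "s = 0") auto
  have "wr s \<le> wr D" using mono s by (auto intro: mono_onD)
  hence wDp: "wr D > 0" using s by auto
  have wdD: "wr d \<le> wr D" using mono d by (auto intro: mono_onD)
  have wd0: "0 \<le> wr d" using nn d by auto
  have eq: "omega_hat D wr d = D / wr D * wr d" by (rule omega_hat_eq2[OF False])
  define t where "t = d / D"
  have t: "0 \<le> t" "t \<le> 1" using d D0 by (auto simp: t_def)
  have "(1 - t) * wr 0 + t * wr D \<le> wr ((1 - t) *\<^sub>R 0 + t *\<^sub>R D)"
    by (rule concave_onD[OF cc t]) (use D0 in auto)
  hence "t * wr D \<le> wr d" using w0 D0 by (simp add: t_def)
  hence "D * (d / D * wr D) \<le> D * wr d" using D0 unfolding t_def by (intro mult_left_mono) auto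
  moreover have "D * (d / D * wr D) = d * wr D" using D0 by simp
  ultimately have "d * wr D \<le> D * wr d" by simp
  hence "d \<le> (D * wr d) / wr D" by (subst pos_le_divide_eq[OF wDp])
  hence a: "d \<le> D / wr D * wr d" by simp
  have b: "wr d \<le> D / wr D * wr d"
  proof -
    have "1 \<le> D / wr D" using wD by (subst pos_le_divide_eq[OF wDp]) simp
    thus ?thesis using mult_right_mono[OF _ wd0, of 1 "D / wr D"] by simp
  qed
  have c: "D / wr D * wr d \<le> D"
  proof -
    have "D / wr D * wr d \<le> D / wr D * wr D" using wdD D0 wDp by (intro mult_left_mono) auto
    thus ?thesis using wDp by simp
  qed
  show ?thesis unfolding eq using a b c by blast
qed

lemma half_le: "(X::real) - Y \<le> 2 * c \<Longrightarrow> X / 2 - Y / 2 \<le> c"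
  by linarith

lemma S_one_side:
  fixes u :: "'a::metric_space \<Rightarrow> real"
  assumes geo: "geodesic_space TYPE('a)"
    and rx: "0 \<le> \<rho> x" and ry: "0 \<le> \<rho> y"
    and BA: "Bx \<rho> x \<subseteq> A" "Bx \<rho> y \<subseteq> A"
    and AD: "\<forall>a\<in>A. \<forall>b\<in>A. dist a b \<le> D"
    and om: "modulus_for D \<omega> u A" and cc: "concave_on {0..D} \<omega>"
    and bdd: "bdd_above (u ` Bx \<rho> y)" "bdd_below (u ` Bx \<rho> x)"
    and mD: "max (dist x y) \<bar>\<rho> x - \<rho> y\<bar> \<le> D"
  shows "(Sup (u ` Bx \<rho> x) + Inf (u ` Bx \<rho> x)) / 2 - (Sup (u ` Bx \<rho> y) + Inf (u ` Bx \<rho> y)) / 2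
     \<le> \<omega> (max (dist x y) \<bar>\<rho> x - \<rho> y\<bar>)"
proof -
  define m where "m = max (dist x y) \<bar>\<rho> x - \<rho> y\<bar>"
  define a where "a = min (max 0 (dist x y + \<rho> x - \<rho> y)) D"
  define b where "b = min (max 0 (dist y x + \<rho> y - \<rho> x)) D"
  have D0: "0 \<le> D" using mD by (metis max.bounded_iff zero_le_dist order_trans)
  have mono: "mono_on {0..D} \<omega>" using om by (auto simp: modulus_for_def modulus_def)
  have lip: "\<forall>p\<in>A. \<forall>q\<in>A. \<bar>u p - u q\<bar> \<le> \<omega> (dist p q)" using om by (auto simp: modulus_for_def)
  have xin: "x \<in> Bx \<rho> x" "y \<in> Bx \<rho> y" using rx ry by (auto simp: Bx_def)
  have ab: "a \<in> {0..D}" "b \<in> {0..D}" using D0 by (auto simp: a_def b_def)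
  have key: "u z \<le> u z' + \<omega> c" if "z \<in> A" "z' \<in> A" "dist z z' \<le> c" "c \<in> {0..D}" for z z' c
  proof -
    have "\<bar>u z - u z'\<bar> \<le> \<omega> (dist z z')" using lip that by blast
    moreover have "\<omega> (dist z z') \<le> \<omega> c" using that AD by (intro mono_onD[OF mono]) auto
    ultimately show ?thesis by linarith
  qed
  have sup: "Sup (u ` Bx \<rho> x) \<le> Sup (u ` Bx \<rho> y) + \<omega> a"
  proof (rule cSUP_least)
    show "Bx \<rho> x \<noteq> {}" using xin by blast
    fix z assume z: "z \<in> Bx \<rho> x"
    obtain z' where z': "z' \<in> Bx \<rho> y" "dist z z' \<le> max 0 (dist x y + \<rho> x - \<rho> y)"
      using ball_shift[OF geo ry z] by blast
    have "dist z z' \<le> D" using AD z z' BA by blast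
    hence "dist z z' \<le> a" using z' by (simp add: a_def)
    hence "u z \<le> u z' + \<omega> a" using key[of z z' a] z z' BA ab by blast
    moreover have "u z' \<le> Sup (u ` Bx \<rho> y)" using z' bdd(1) by (intro cSUP_upper)
    ultimately show "u z \<le> Sup (u ` Bx \<rho> y) + \<omega> a" by linarith
  qed
  have inf: "Inf (u ` Bx \<rho> x) - \<omega> b \<le> Inf (u ` Bx \<rho> y)"
  proof (rule cINF_greatest)
    show "Bx \<rho> y \<noteq> {}" using xin by blast
    fix z' assume z': "z' \<in> Bx \<rho> y"
    obtain z where z: "z \<in> Bx \<rho> x" "dist z' z \<le> max 0 (dist y x + \<rho> y - \<rho> x)"
      using ball_shift[OF geo rx z'] by blast
    have "dist z' z \<le> D" using AD z z' BA by blast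
    hence "dist z' z \<le> b" using z by (simp add: b_def)
    hence "dist z z' \<le> b" by (simp add: dist_commute)
    hence "u z \<le> u z' + \<omega> b" using key[of z z' b] z z' BA ab by blast
    moreover have "Inf (u ` Bx \<rho> x) \<le> u z" using z bdd(2) by (intro cINF_lower)
    ultimately show "Inf (u ` Bx \<rho> x) - \<omega> b \<le> u z'" by linarith
  qed
  have avg: "\<omega> a + \<omega> b \<le> 2 * \<omega> ((a+b)/2)" by (rule concave_avg[OF cc ab])
  have "a + b \<le> 2 * m" unfolding a_def b_def m_def
    by (simp add: dist_commute max_def min_def abs_if split: if_splits)
  hence "\<omega> ((a+b)/2) \<le> \<omega> m" using ab mD unfolding m_def[symmetric]
    by (intro mono_onD[OF mono]) auto
  hence "\<omega> a + \<omega> b \<le> 2 * \<omega> m" using avg unfolding m_def by linarith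
  moreover have "Sup (u ` Bx \<rho> x) + Inf (u ` Bx \<rho> x) - (Sup (u ` Bx \<rho> y) + Inf (u ` Bx \<rho> y))
     \<le> \<omega> a + \<omega> b" using sup inf by linarith
  ultimately have "Sup (u ` Bx \<rho> x) + Inf (u ` Bx \<rho> x) - (Sup (u ` Bx \<rho> y) + Inf (u ` Bx \<rho> y))
     \<le> 2 * \<omega> m" by linarith
  thus ?thesis unfolding m_def by (rule half_le)
qed

theorem lemma4p2:
  fixes \<mu> :: "'a::metric_space measure"
    and \<Omega> :: "'a set"
    and \<rho> :: "'a \<Rightarrow> real"
    and wr :: "real \<Rightarrow> real"
    and W :: "'a set \<Rightarrow> real \<Rightarrow> real"
    and \<alpha> :: real
    and u :: "'a \<Rightarrow> real"
    and K :: "'a set"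
    and \<omega> :: "real \<Rightarrow> real"
  assumes proper: "proper_space TYPE('a)"
    and geodesic: "geodesic_space TYPE('a)"
    and mms: "metric_measure_space \<mu>"
    and dom: "bounded_domain \<Omega>"
    and adm: "admissible_radius \<Omega> \<rho>"
    and wr: "modulus_for (diameter \<Omega>) wr \<rho> \<Omega>"
    and wr_concave: "concave_on {0..diameter \<Omega>} wr"
    and wr_diam: "wr (diameter \<Omega>) \<le> diameter \<Omega>"
    and W_mod: "\<And>K'. compact K' \<Longrightarrow> K' \<subseteq> \<Omega> \<Longrightarrow> modulus (diameter \<Omega>) (W K')"
    and W_bound: "\<And>K' v x y n. compact K' \<Longrightarrow> K' \<subseteq> \<Omega> \<Longrightarrow>
        v \<in> borel_measurable \<mu> \<Longrightarrow> ess_bounded_on \<mu> (closure \<Omega>) v \<Longrightarrow>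
        x \<in> K' \<Longrightarrow> y \<in> K' \<Longrightarrow> n \<ge> 1 \<Longrightarrow>
        \<bar>(Mop \<mu> \<rho> \<Omega> ^^ n) v x - (Mop \<mu> \<rho> \<Omega> ^^ n) v y\<bar>
          \<le> ess_norm \<mu> (closure \<Omega>) v * W K' (dist x y)"
    and alpha: "\<bar>\<alpha>\<bar> \<le> 1"
    and u_cont: "continuous_on (closure \<Omega>) u"
    and K: "compact K" "K \<subseteq> \<Omega>"
    and \<omega>: "modulus_for (diameter \<Omega>) \<omega> u (Ktilde \<rho> K)"
    and \<omega>_concave: "concave_on {0..diameter \<Omega>} \<omega>"
  shows "\<forall>x\<in>K. \<forall>y\<in>K.
    \<bar>Top \<mu> \<rho> \<Omega> \<alpha> u x - Top \<mu> \<rho> \<Omega> \<alpha> u y\<bar>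
      \<le> \<bar>\<alpha>\<bar> * \<omega> (omega_hat (diameter \<Omega>) wr (dist x y))
        + (1 - \<alpha>) * (SUP z\<in>closure \<Omega>. \<bar>u z\<bar>) * W K (dist x y)"
proof (intro ballI)
  fix x y assume x: "x \<in> K" and y: "y \<in> K"
  have xO: "x \<in> \<Omega>" "y \<in> \<Omega>" using K x y by auto
  define D where "D = diameter \<Omega>"
  have op: "open \<Omega>" and bd: "bounded \<Omega>" and ne: "\<Omega> \<noteq> {}"
    using dom by (auto simp: bounded_domain_def)
  have cpt: "compact (closure \<Omega>)" using proper bd unfolding proper_space_def
    by (simp add: bounded_closure)
  have rpos: "\<forall>z\<in>\<Omega>. 0 < \<rho> z" using adm by (auto simp: admissible_radius_def)
  have Bcl: "Bx \<rho> z \<subseteq> closure \<Omega>" if "z \<in> \<Omega>" for z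
    using ball_closure[OF geodesic adm that op] .
  have KtO: "Ktilde \<rho> K \<subseteq> closure \<Omega>" using Bcl K by (auto simp: Ktilde_def)
  have BK: "Bx \<rho> x \<subseteq> Ktilde \<rho> K" "Bx \<rho> y \<subseteq> Ktilde \<rho> K" using x y by (auto simp: Ktilde_def)
  have distD: "dist a b \<le> D" if "a \<in> closure \<Omega>" "b \<in> closure \<Omega>" for a b
    using diameter_bounded_bound[of "closure \<Omega>" a b] diameter_closure[OF bd] bounded_closure[OF bd] that
    by (simp add: D_def)
  have ubd: "bounded (u ` closure \<Omega>)" using compact_continuous_image[OF u_cont cpt] compact_imp_bounded by blast
  then obtain B where B: "\<forall>z\<in>closure \<Omega>. \<bar>u z\<bar> \<le> B" unfolding bounded_iff by auto
  have bddA: "bdd_above (u ` closure \<Omega>)" "bdd_below (u ` closure \<Omega>)"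
    using ubd by (auto intro: bounded_imp_bdd_above bounded_imp_bdd_below)
  have bddx: "bdd_above (u ` Bx \<rho> z)" "bdd_below (u ` Bx \<rho> z)" if "z \<in> \<Omega>" for z
    using bdd_above_mono[OF bddA(1) image_mono[OF Bcl[OF that]]]
      bdd_below_mono[OF bddA(2) image_mono[OF Bcl[OF that]]] by auto
  have dxy: "0 \<le> dist x y" "dist x y \<le> D" using distD xO closure_subset by auto
  have wrm: "modulus D wr" and wrb: "\<bar>\<rho> x - \<rho> y\<bar> \<le> wr (dist x y)"
    using wr xO unfolding D_def modulus_for_def by auto
  have oh: "dist x y \<le> omega_hat D wr (dist x y) \<and> wr (dist x y) \<le> omega_hat D wr (dist x y)
      \<and> omega_hat D wr (dist x y) \<le> D"
    using omega_hat_props[OF wrm _ _ dxy] wr_concave wr_diam unfolding D_def by blast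
  define m where "m = max (dist x y) \<bar>\<rho> x - \<rho> y\<bar>"
  have m: "0 \<le> m" "m \<le> omega_hat D wr (dist x y)" "m \<le> D" using oh wrb dxy by (auto simp: m_def)
  have m': "max (dist y x) \<bar>\<rho> y - \<rho> x\<bar> = m" by (simp add: m_def dist_commute abs_minus_commute)
  have AD: "\<forall>a\<in>Ktilde \<rho> K. \<forall>b\<in>Ktilde \<rho> K. dist a b \<le> D" using distD KtO by blast
  have om: "modulus_for D \<omega> u (Ktilde \<rho> K)" using \<omega> by (simp add: D_def)
  have omc: "concave_on {0..D} \<omega>" using \<omega>_concave by (simp add: D_def)
  have r0: "0 \<le> \<rho> x" "0 \<le> \<rho> y" using rpos xO by (auto intro: less_imp_le)
  have Sx: "Sop \<rho> \<Omega> u x = (Sup (u ` Bx \<rho> x) + Inf (u ` Bx \<rho> x)) / 2"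
    and Sy: "Sop \<rho> \<Omega> u y = (Sup (u ` Bx \<rho> y) + Inf (u ` Bx \<rho> y)) / 2"
    using xO by (simp_all add: Sop_def)
  have S1: "Sop \<rho> \<Omega> u x - Sop \<rho> \<Omega> u y \<le> \<omega> m"
    unfolding Sx Sy m_def
    by (rule S_one_side[OF geodesic r0(1) r0(2) BK(1) BK(2) AD om omc bddx(1)[OF xO(2)] bddx(2)[OF xO(1)]])
      (use m in \<open>simp add: m_def\<close>)
  have S2: "Sop \<rho> \<Omega> u y - Sop \<rho> \<Omega> u x \<le> \<omega> m"
    unfolding Sx Sy m'[symmetric]
    by (rule S_one_side[OF geodesic r0(2) r0(1) BK(2) BK(1) AD om omc bddx(1)[OF xO(1)] bddx(2)[OF xO(2)]])
      (use m m' in simp)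
  have mono\<omega>: "mono_on {0..D} \<omega>" using om unfolding modulus_for_def modulus_def by blast
  have "\<omega> m \<le> \<omega> (omega_hat D wr (dist x y))"
    by (rule mono_onD[OF mono\<omega>]) (use m oh dxy in auto)
  hence Sb: "\<bar>Sop \<rho> \<Omega> u x - Sop \<rho> \<Omega> u y\<bar> \<le> \<omega> (omega_hat D wr (dist x y))" using S1 S2 by linarith
  define v where "v = (\<lambda>z. indicator (closure \<Omega>) z *\<^sub>R u z)"
  have vu: "Mop \<mu> \<rho> \<Omega> v z = Mop \<mu> \<rho> \<Omega> u z" if "z \<in> \<Omega>" for z
  proof -
    have "(\<lambda>w. indicator (Bx \<rho> z) w *\<^sub>R v w) = (\<lambda>w. indicator (Bx \<rho> z) w *\<^sub>R u w)"
    proof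
      fix w show "indicator (Bx \<rho> z) w *\<^sub>R v w = indicator (Bx \<rho> z) w *\<^sub>R u w"
        using Bcl[OF that] by (cases "w \<in> Bx \<rho> z") (auto simp: v_def)
    qed
    thus ?thesis using that by (simp add: Mop_def set_lebesgue_integral_def)
  qed
  have msets: "sets \<mu> = sets borel" using mms by (simp add: metric_measure_space_def)
  have vmeas: "v \<in> borel_measurable \<mu>"
    unfolding measurable_cong_sets[OF msets refl] v_def
    by (rule borel_measurable_continuous_on_indicator[OF borel_closed[OF closed_closure] u_cont])
  define SU where "SU = (SUP z\<in>closure \<Omega>. \<bar>u z\<bar>)"
  have bddU: "bdd_above ((\<lambda>z. \<bar>u z\<bar>) ` closure \<Omega>)" using B by (intro bdd_aboveI2) auto
  have uSU: "\<bar>u z\<bar> \<le> SU" if "z \<in> closure \<Omega>" for z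
    unfolding SU_def using bddU that by (rule cSUP_upper2) simp
  have SU0: "0 \<le> SU" using uSU[of x] xO closure_subset by force
  have AEv: "AE z in \<mu>. z \<in> closure \<Omega> \<longrightarrow> \<bar>v z\<bar> \<le> SU"
    by (rule AE_I2) (auto simp: v_def uSU)
  have essb: "ess_bounded_on \<mu> (closure \<Omega>) v" unfolding ess_bounded_on_def using AEv by blast
  have essn: "ess_norm \<mu> (closure \<Omega>) v \<le> SU"
    unfolding ess_norm_def using SU0 AEv by (intro cInf_lower) (auto intro: bdd_belowI[of _ 0])
  have Wnn: "0 \<le> W K (dist x y)"
    using W_mod[OF K] dxy unfolding modulus_def D_def by auto
  have "\<bar>(Mop \<mu> \<rho> \<Omega> ^^ 1) v x - (Mop \<mu> \<rho> \<Omega> ^^ 1) v y\<bar> \<le> ess_norm \<mu> (closure \<Omega>) v * W K (dist x y)"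
    by (rule W_bound[OF K vmeas essb x y]) simp
  hence "\<bar>Mop \<mu> \<rho> \<Omega> u x - Mop \<mu> \<rho> \<Omega> u y\<bar> \<le> ess_norm \<mu> (closure \<Omega>) v * W K (dist x y)"
    using vu xO by simp
  also have "\<dots> \<le> SU * W K (dist x y)" using essn Wnn by (rule mult_right_mono)
  finally have Mb: "\<bar>Mop \<mu> \<rho> \<Omega> u x - Mop \<mu> \<rho> \<Omega> u y\<bar> \<le> SU * W K (dist x y)" .
  have a1: "0 \<le> 1 - \<alpha>" using alpha by linarith
  have "\<bar>Top \<mu> \<rho> \<Omega> \<alpha> u x - Top \<mu> \<rho> \<Omega> \<alpha> u y\<bar>
      = \<bar>\<alpha> * (Sop \<rho> \<Omega> u x - Sop \<rho> \<Omega> u y) + (1 - \<alpha>) * (Mop \<mu> \<rho> \<Omega> u x - Mop \<mu> \<rho> \<Omega> u y)\<bar>"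
    by (simp add: Top_def algebra_simps)
  also have "\<dots> \<le> \<bar>\<alpha> * (Sop \<rho> \<Omega> u x - Sop \<rho> \<Omega> u y)\<bar> + \<bar>(1 - \<alpha>) * (Mop \<mu> \<rho> \<Omega> u x - Mop \<mu> \<rho> \<Omega> u y)\<bar>"
    by (rule abs_triangle_ineq)
  also have "\<dots> = \<bar>\<alpha>\<bar> * \<bar>Sop \<rho> \<Omega> u x - Sop \<rho> \<Omega> u y\<bar> + (1 - \<alpha>) * \<bar>Mop \<mu> \<rho> \<Omega> u x - Mop \<mu> \<rho> \<Omega> u y\<bar>"
    using a1 by (simp add: abs_mult)
  also have "\<dots> \<le> \<bar>\<alpha>\<bar> * \<omega> (omega_hat D wr (dist x y)) + (1 - \<alpha>) * (SU * W K (dist x y))"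
    using Sb Mb a1 by (intro add_mono mult_left_mono) auto
  finally show "\<bar>Top \<mu> \<rho> \<Omega> \<alpha> u x - Top \<mu> \<rho> \<Omega> \<alpha> u y\<bar>
      \<le> \<bar>\<alpha>\<bar> * \<omega> (omega_hat (diameter \<Omega>) wr (dist x y))
        + (1 - \<alpha>) * (SUP z\<in>closure \<Omega>. \<bar>u z\<bar>) * W K (dist x y)"
    by (simp add: D_def SU_def mult.assoc)
qed

end
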